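(* Let $L>0$, and let $V\in C^1([0,L];\mathbb{R})$ and, for each $\varepsilon\in(0,1]$, $V_\varepsilon\in C^1([0,L];\mathbb{R})$ with $\|V-V_\varepsilon\|_{C^1([0,L])}\to0$ as $\varepsilon\to0^+$. Assume that the only point $x\in[0,L]$ with $V'(x)=0$ is $x=\mathbf{x}_0\in(0,L)$, and $V(\mathbf{x}_0)=\min_{[0,L]}V$. Then for any interval $U\subset[0,L]$ with nonempty interior and any $\delta>0$ there is $\varepsilon_0>0$ such that for all $\varepsilon\in(0,\varepsilon_0)$, all $E\in\mathbb{R}$ and all $\psi$ satisfying $$-\varepsilon^2\psi''+V_\varepsilon\psi=E\psi,\qquad \psi\in H^2(0,L)\cap H^1_0(0,L),\qquad \|\psi\|_{L^2(0,L)}=1,$$ we have $$\|\psi\|_{L^2(U)}\ge e^{-\frac1\varepsilon(d_{A,E}(U)+\delta)},\qquad d_{A,E}(U)=\inf_{x\in U}d_{A,E}(x),$$ and $$\frac{\varepsilon}{\sqrt{|E|+1}}|\psi'(0)|\ge e^{-\frac1\varepsilon(d_{A,E}(0)+\delta)},\qquad \frac{\varepsilon}{\sqrt{|E|+1}}|\psi'(L)|\ge e^{-\frac1\varepsilon(d_{A,E}(L)+\delta)}.$$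
   Context: Let $E_0=\min_{[0,L]}V=V(\mathbf{x}_0)$. For $E\ge E_0$ let $K_E=\{x\in[0,L]: V(x)\le E\}$ and define the Agmon distance $d_{A,E}(x)=\inf_{y\in K_E}\left|\int_y^x\sqrt{(V(s)-E)_+}\,ds\right|$, where $(t)_+=\max(t,0)$. For $E<E_0$, set by convention $d_{A,E}:=d_{A,E_0}$. *)

theory Defs
  imports "HOL-Analysis.Analysis"
begin

definition interval_int :: "(real \<Rightarrow> real) \<Rightarrow> real \<Rightarrow> real \<Rightarrow> real" where
  "interval_int f y x = (if y \<le> x then integral {y..x} f else integral {x..y} f)"

text \<open>Agmon distance d_{A,E}(x) for potential V on [0,L]; for E below the
  minimum E0 of V on [0,L] the energy is replaced by E0 (via max).\<close>
definition agmon_dist :: "(real \<Rightarrow> real) \<Rightarrow> real \<Rightarrow> real \<Rightarrow> real \<Rightarrow> real" where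
  "agmon_dist V L E x =
     (let E' = max E (Inf (V ` {0..L}));
          K = {y \<in> {0..L}. V y \<le> E'}
      in INF y\<in>K. \<bar>interval_int (\<lambda>s. sqrt (max (V s - E') 0)) y x\<bar>)"

end

theory Submission
  imports Defs
begin


lemma within_to_at:
  fixes f :: "real \<Rightarrow> real"
  shows "(f has_real_derivative D) (at x within {a..b}) \<Longrightarrow> a < x \<Longrightarrow> x < b \<Longrightarrow> (f has_real_derivative D) (at x)"
  by (metis at_within_interior interior_atLeastAtMost_real greaterThanLessThan_iff)

lemma deriv_cont_on:
  fixes f :: "real \<Rightarrow> real"
  shows "\<forall>x\<in>S. (f has_real_derivative f' x) (at x within S) \<Longrightarrow> continuous_on S f"
  by (meson DERIV_continuous continuous_on_eq_continuous_within)

lemma mono_deriv: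
  fixes F F' :: "real \<Rightarrow> real"
  assumes "a \<le> b" "\<forall>x\<in>{a..b}. (F has_real_derivative F' x) (at x within {a..b})"
    "\<forall>x\<in>{a..b}. F' x \<ge> 0"
  shows "F a \<le> F b"
proof (rule DERIV_nonneg_imp_increasing_open[OF assms(1)])
  fix x assume "a < x" "x < b"
  then show "\<exists>y. DERIV F x :> y \<and> 0 \<le> y" using assms within_to_at[of F "F' x" x a b] by auto
next
  show "continuous_on {a..b} F" using deriv_cont_on assms(2) by blast
qed

lemma gronwall2:
  fixes P P' R r :: "real \<Rightarrow> real"
  assumes ab: "a \<le> b"
    and dP: "\<forall>x\<in>{a..b}. (P has_real_derivative P' x) (at x within {a..b})"
    and dR: "\<forall>x\<in>{a..b}. (R has_real_derivative r x) (at x within {a..b})"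
    and bd: "\<forall>x\<in>{a..b}. \<bar>P' x\<bar> \<le> r x * P x"
  shows "P b \<ge> P a * exp (R a - R b)" and "P a \<ge> P b * exp (R a - R b)"
proof -
  have d1: "\<forall>x\<in>{a..b}. ((\<lambda>x. P x * exp (R x)) has_real_derivative
       (P' x * exp (R x) + P x * (exp (R x) * r x))) (at x within {a..b})"
    using dP dR by (auto intro!: derivative_eq_intros)
  have "P a * exp (R a) \<le> P b * exp (R b)"
  proof (rule mono_deriv[OF ab d1], intro ballI)
    fix x assume x: "x \<in> {a..b}"
    have "P' x + r x * P x \<ge> 0" using bd x by (smt (verit))
    then have "(P' x + r x * P x) * exp (R x) \<ge> 0" by simp
    then show "0 \<le> P' x * exp (R x) + P x * (exp (R x) * r x)" by (simp add: algebra_simps)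
  qed
  then have "P a * exp (R a) * exp (- R b) \<le> P b * exp (R b) * exp (- R b)"
    by (simp add: mult_right_mono)
  then show "P b \<ge> P a * exp (R a - R b)" by (simp add: exp_diff exp_minus field_simps)
  have d2: "\<forall>x\<in>{a..b}. ((\<lambda>x. - (P x * exp (- R x))) has_real_derivative
       - (P' x * exp (- R x) + P x * (exp (- R x) * (- r x)))) (at x within {a..b})"
    using dP dR by (auto intro!: derivative_eq_intros)
  have "- (P a * exp (- R a)) \<le> - (P b * exp (- R b))"
  proof (rule mono_deriv[OF ab d2], intro ballI)
    fix x assume x: "x \<in> {a..b}"
    have "r x * P x - P' x \<ge> 0" using bd x by (smt (verit))
    then have "(r x * P x - P' x) * exp (- R x) \<ge> 0" by simp
    then show "0 \<le> - (P' x * exp (- R x) + P x * (exp (- R x) * (- r x)))" by (simp add: algebra_simps)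
  qed
  then have "P b * exp (- R b) * exp (R a) \<le> P a * exp (- R a) * exp (R a)"
    by (simp add: mult_right_mono)
  then show "P a \<ge> P b * exp (R a - R b)" by (simp add: exp_diff exp_minus field_simps)
qed



lemma inner_rd:
  fixes f g :: "real \<Rightarrow> 'a::real_inner"
  assumes "(f has_vector_derivative f') (at x within s)" "(g has_vector_derivative g') (at x within s)"
  shows "((\<lambda>x. f x \<bullet> g x) has_real_derivative (f x \<bullet> g' + f' \<bullet> g x)) (at x within s)"
  using bounded_bilinear.has_vector_derivative[OF bounded_bilinear_inner assms]
  by (simp add: has_real_derivative_iff_has_vector_derivative)

lemma quasiconv:
  fixes V V' :: "real \<Rightarrow> real"
  assumes V_deriv: "\<forall>x\<in>{0..L}. (V has_real_derivative V' x) (at x within {0..L})"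
    and crit: "\<forall>x\<in>{0..L}. V' x = 0 \<longleftrightarrow> x = x0"
    and x0_min: "\<forall>x\<in>{0..L}. V x0 \<le> V x"
    and "0 \<le> a" "a \<le> z" "z \<le> b" "b \<le> L"
  shows "V z \<le> max (V a) (V b)"
proof -
  have cont: "continuous_on {a..b} V"
    using deriv_cont_on[OF V_deriv] assms(4-7) continuous_on_subset by fastforce
  obtain m where m: "m \<in> {a..b}" "\<forall>y\<in>{a..b}. V y \<le> V m"
    using continuous_attains_sup[OF compact_Icc _ cont] assms(5,6) by auto
  have zm: "V z \<le> V m" using m assms(5,6) by auto
  show ?thesis
  proof (cases "m = a \<or> m = b")
    case True then show ?thesis using zm by auto
  next
    case False
    then have am: "a < m" "m < b" using m by auto
    have dm: "DERIV V m :> V' m"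
      using within_to_at[of V "V' m" m 0 L] V_deriv am assms(4-7) by auto
    have "V' m = 0"
    proof (rule DERIV_local_max[OF dm, of "min (m - a) (b - m)"])
      show "0 < min (m - a) (b - m)" using am by auto
      show "\<forall>y. \<bar>m - y\<bar> < min (m - a) (b - m) \<longrightarrow> V y \<le> V m"
        using m(2) by (auto simp: abs_less_iff)
    qed
    then have "m = x0" using crit am assms(4-7) by auto
    then have "V m \<le> V a" using x0_min assms(4-7) by auto
    then show ?thesis using zm by auto
  qed
qed

lemma maxpoint:
  fixes \<psi> \<psi>' :: "real \<Rightarrow> complex" and q :: "real \<Rightarrow> real"
  assumes L: "L > 0"
    and d1: "\<forall>x\<in>{0..L}. (\<psi> has_vector_derivative \<psi>' x) (at x within {0..L})"
    and d2: "\<forall>x\<in>{0..L}. (\<psi>' has_vector_derivative (q x *\<^sub>R \<psi> x)) (at x within {0..L})"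
    and b0: "\<psi> 0 = 0" and bL: "\<psi> L = 0"
    and nrm: "integral {0..L} (\<lambda>x. (norm (\<psi> x))\<^sup>2) = 1"
  shows "\<exists>p\<in>{0..L}. q p \<le> 0 \<and> (norm (\<psi> p))\<^sup>2 \<ge> 1 / L"
proof -
  define f where "f x = \<psi> x \<bullet> \<psi> x" for x
  define D where "D x = 2 * (\<psi> x \<bullet> \<psi>' x)" for x
  have df: "\<forall>x\<in>{0..L}. (f has_real_derivative D x) (at x within {0..L})"
    using inner_rd[OF d1[rule_format] d1[rule_format]] unfolding f_def D_def
    by (auto simp: inner_commute)
  have dD: "\<forall>x\<in>{0..L}. (D has_real_derivative 2 * (q x * f x + \<psi>' x \<bullet> \<psi>' x)) (at x within {0..L})"
  proof
    fix x assume x: "x \<in> {0..L}"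
    have "((\<lambda>x. 2 * (\<psi> x \<bullet> \<psi>' x)) has_real_derivative 2 * (\<psi> x \<bullet> (q x *\<^sub>R \<psi> x) + \<psi>' x \<bullet> \<psi>' x)) (at x within {0..L})"
      using DERIV_cmult[OF inner_rd[OF d1[rule_format, OF x] d2[rule_format, OF x]], of 2] by simp
    then show "(D has_real_derivative 2 * (q x * f x + \<psi>' x \<bullet> \<psi>' x)) (at x within {0..L})"
      unfolding D_def f_def by simp
  qed
  have fn: "f x = (norm (\<psi> x))\<^sup>2" for x unfolding f_def by (simp add: power2_norm_eq_inner)
  have cf: "continuous_on {0..L} f" using deriv_cont_on[OF df] .
  obtain p where p: "p \<in> {0..L}" "\<forall>y\<in>{0..L}. f y \<le> f p"
    using continuous_attains_sup[OF compact_Icc _ cf] L by auto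
  have "f = (\<lambda>x. (norm (\<psi> x))\<^sup>2)" using fn by auto
  then have "1 = integral {0..L} f" using nrm by simp
  also have "\<dots> \<le> integral {0..L} (\<lambda>_. f p)"
    by (rule integral_le) (use p cf integrable_continuous_interval in auto)
  also have "\<dots> = L * f p" using L by simp
  finally have fp: "f p \<ge> 1 / L" using L by (simp add: field_simps)
  have qp: "q p \<le> 0"
  proof (rule ccontr)
    assume "\<not> q p \<le> 0"
    then have qp: "q p > 0" by simp
    have fpos: "f p > 0" using fp L by (smt (verit) divide_pos_pos)
    have "p \<noteq> 0" "p \<noteq> L" using fpos b0 bL unfolding f_def by auto
    then have pin: "0 < p" "p < L" using p by auto
    have dfp: "DERIV f p :> D p" using within_to_at[of f "D p" p 0 L] df pin by auto
    have Dp: "D p = 0"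
    proof (rule DERIV_local_max[OF dfp, of "min p (L - p)"])
      show "0 < min p (L - p)" using pin by auto
      show "\<forall>y. \<bar>p - y\<bar> < min p (L - p) \<longrightarrow> f y \<le> f p"
        using p(2) by (auto simp: abs_less_iff)
    qed
    have dDp: "DERIV D p :> 2 * (q p * f p + \<psi>' p \<bullet> \<psi>' p)"
      using within_to_at[of D _ p 0 L] dD pin by auto
    have "2 * (q p * f p + \<psi>' p \<bullet> \<psi>' p) > 0"
      using qp fpos by (smt (verit) inner_ge_zero mult_pos_pos)
    from DERIV_pos_inc_right[OF dDp this] obtain d where d: "d > 0" "\<forall>h>0. h < d \<longrightarrow> D p < D (p + h)"
      by blast
    define h1 where "h1 = min d (L - p) / 2"
    have h1: "h1 > 0" "h1 < d" "p + h1 < L" using d pin unfolding h1_def by (auto simp: min_def field_simps)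
    obtain z where z: "p < z" "z < p + h1" "f (p + h1) - f p = (p + h1 - p) * D z"
      using MVT2[of p "p + h1" f D] h1 df within_to_at[of f _ _ 0 L] pin
      by (smt (verit, best) atLeastAtMost_iff)
    have "D z > 0" using d(2)[rule_format, of "z - p"] z h1 Dp by auto
    then have "f (p + h1) > f p" using z h1 by (smt (verit) mult_pos_pos)
    moreover have "f (p + h1) \<le> f p" using p(2) h1 pin by auto
    ultimately show False by simp
  qed
  show ?thesis using p qp fp fn by auto
qed



lemma cacc_pointwise:
  fixes a b c c' t q w Q m l :: real
  assumes "a \<ge> 0" "b \<ge> 0" "\<bar>t\<bar> \<le> a * b" "m \<le> b\<^sup>2 + w * a\<^sup>2" "0 \<le> w" "w \<le> Q" "\<bar>q\<bar> \<le> Q"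
    "c\<^sup>2 \<le> l^4/16" "c'\<^sup>2 \<le> l\<^sup>2"
  shows "m * c\<^sup>2 \<le> 2 * (2 * c * c' * t + c\<^sup>2 * (b\<^sup>2 + q * a\<^sup>2)) + (4 * l\<^sup>2 + Q * l^4 / 4) * a\<^sup>2"
proof -
  have Q0: "Q \<ge> 0" using assms by linarith
  have c2: "c\<^sup>2 \<ge> 0" by simp
  have s1: "m * c\<^sup>2 \<le> c\<^sup>2 * b\<^sup>2 + Q * c\<^sup>2 * a\<^sup>2"
  proof -
    have "m * c\<^sup>2 \<le> (b\<^sup>2 + w * a\<^sup>2) * c\<^sup>2" using assms(4) c2 by (rule mult_right_mono)
    also have "\<dots> \<le> (b\<^sup>2 + Q * a\<^sup>2) * c\<^sup>2"
      using assms(6) c2 by (intro mult_right_mono) (auto intro: mult_right_mono)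
    finally show ?thesis by (simp add: algebra_simps)
  qed
  have s2: "4 * c * c' * t \<ge> - (c\<^sup>2 * b\<^sup>2 + 4 * c'\<^sup>2 * a\<^sup>2)"
  proof -
    have "\<bar>4 * c * c' * t\<bar> = 4 * \<bar>c\<bar> * \<bar>c'\<bar> * \<bar>t\<bar>" by (simp add: abs_mult)
    also have "\<dots> \<le> 4 * \<bar>c\<bar> * \<bar>c'\<bar> * (a * b)" using assms(3) by (intro mult_left_mono) auto
    also have "\<dots> \<le> c\<^sup>2 * b\<^sup>2 + 4 * c'\<^sup>2 * a\<^sup>2"
    proof -
      have "0 \<le> (\<bar>c\<bar> * b - 2 * \<bar>c'\<bar> * a)\<^sup>2" by simp
      then show ?thesis by (simp add: power2_eq_square algebra_simps)
    qed
    finally show ?thesis by linarith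
  qed
  have s3: "2 * c\<^sup>2 * q * a\<^sup>2 \<ge> - 2 * Q * c\<^sup>2 * a\<^sup>2"
  proof -
    have "\<bar>2 * c\<^sup>2 * q * a\<^sup>2\<bar> = 2 * c\<^sup>2 * \<bar>q\<bar> * a\<^sup>2" by (simp add: abs_mult)
    also have "\<dots> \<le> 2 * c\<^sup>2 * Q * a\<^sup>2" using assms(7) by (intro mult_right_mono mult_left_mono) auto
    finally show ?thesis by (simp add: algebra_simps)
  qed
  have s4: "(4 * c'\<^sup>2 + 3 * Q * c\<^sup>2) * a\<^sup>2 \<le> (4 * l\<^sup>2 + Q * l^4 / 4) * a\<^sup>2"
  proof (rule mult_right_mono)
    have "3 * Q * c\<^sup>2 \<le> 3 * Q * (l^4/16)" using assms(8) Q0 by (intro mult_left_mono) auto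
    moreover have "3 * Q * (l^4/16) \<le> Q * l^4 / 4" using Q0 by (simp add: field_simps)
    ultimately show "4 * c'\<^sup>2 + 3 * Q * c\<^sup>2 \<le> 4 * l\<^sup>2 + Q * l ^ 4 / 4" using assms(9) by linarith
  qed simp
  show ?thesis using s1 s2 s3 s4 by (simp add: algebra_simps)
qed

lemma chi_integral:
  fixes \<alpha> \<beta> :: real
  assumes "\<alpha> \<le> \<beta>"
  shows "((\<lambda>x. ((x - \<alpha>) * (\<beta> - x))\<^sup>2) has_integral (\<beta> - \<alpha>)^5 / 30) {\<alpha>..\<beta>}"
proof -
  define l where "l = \<beta> - \<alpha>"
  define P where "P x = l\<^sup>2 * (x - \<alpha>)^3 / 3 - l * (x - \<alpha>)^4 / 2 + (x - \<alpha>)^5 / 5" for x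
  have "\<forall>x\<in>{\<alpha>..\<beta>}. (P has_vector_derivative ((x - \<alpha>) * (\<beta> - x))\<^sup>2) (at x within {\<alpha>..\<beta>})"
  proof
    fix x
    have "(P has_real_derivative ((x - \<alpha>) * (\<beta> - x))\<^sup>2) (at x within {\<alpha>..\<beta>})"
      unfolding P_def l_def
      apply (auto intro!: derivative_eq_intros)
      by (simp add: field_simps power2_eq_square power3_eq_cube power4_eq_xxxx)
    then show "(P has_vector_derivative ((x - \<alpha>) * (\<beta> - x))\<^sup>2) (at x within {\<alpha>..\<beta>})"
      by (simp add: has_real_derivative_iff_has_vector_derivative)
  qed
  then have "((\<lambda>x. ((x - \<alpha>) * (\<beta> - x))\<^sup>2) has_integral P \<beta> - P \<alpha>) {\<alpha>..\<beta>}"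
    using fundamental_theorem_of_calculus[OF assms, of P "\<lambda>x. ((x - \<alpha>) * (\<beta> - x))\<^sup>2"] by blast
  moreover have "P \<beta> - P \<alpha> = (\<beta> - \<alpha>)^5 / 30"
    unfolding P_def l_def by (simp add: power2_eq_square power3_eq_cube power4_eq_xxxx field_simps) algebra
  ultimately show ?thesis by simp
qed



lemma vd_cont_on:
  fixes f :: "real \<Rightarrow> 'a::real_normed_vector"
  shows "\<forall>x\<in>S. (f has_vector_derivative f' x) (at x within S) \<Longrightarrow> continuous_on S f"
  by (meson has_vector_derivative_continuous continuous_on_eq_continuous_within)

lemma caccioppoli:
  fixes \<psi> \<psi>' :: "real \<Rightarrow> complex" and q w :: "real \<Rightarrow> real"
  assumes ab: "\<alpha> \<le> \<beta>"
    and d1: "\<forall>x\<in>{\<alpha>..\<beta>}. (\<psi> has_vector_derivative \<psi>' x) (at x within {\<alpha>..\<beta>})"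
    and d2: "\<forall>x\<in>{\<alpha>..\<beta>}. (\<psi>' has_vector_derivative (q x *\<^sub>R \<psi> x)) (at x within {\<alpha>..\<beta>})"
    and qb: "\<forall>x\<in>{\<alpha>..\<beta>}. \<bar>q x\<bar> \<le> Q"
    and wb: "\<forall>x\<in>{\<alpha>..\<beta>}. 0 \<le> w x \<and> w x \<le> Q"
    and mb: "\<forall>x\<in>{\<alpha>..\<beta>}. m \<le> (norm (\<psi>' x))\<^sup>2 + w x * (norm (\<psi> x))\<^sup>2"
  shows "m * (\<beta> - \<alpha>)^5 / 30 \<le> (4 * (\<beta> - \<alpha>)\<^sup>2 + Q * (\<beta> - \<alpha>)^4 / 4) * integral {\<alpha>..\<beta>} (\<lambda>x. (norm (\<psi> x))\<^sup>2)"
proof -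
  define l where "l = \<beta> - \<alpha>"
  define K where "K = 4 * l\<^sup>2 + Q * l^4 / 4"
  define ch where "ch x = (x - \<alpha>) * (\<beta> - x)" for x
  define cd where "cd x = \<beta> + \<alpha> - 2 * x" for x
  define F where "F x = (ch x)\<^sup>2 * (\<psi> x \<bullet> \<psi>' x)" for x
  define F' where "F' x = 2 * ch x * cd x * (\<psi> x \<bullet> \<psi>' x) + (ch x)\<^sup>2 * ((norm (\<psi>' x))\<^sup>2 + q x * (norm (\<psi> x))\<^sup>2)" for x
  have dF: "\<forall>x\<in>{\<alpha>..\<beta>}. (F has_vector_derivative F' x) (at x within {\<alpha>..\<beta>})"
  proof
    fix x assume x: "x \<in> {\<alpha>..\<beta>}"
    have i: "((\<lambda>x. \<psi> x \<bullet> \<psi>' x) has_real_derivative (\<psi> x \<bullet> (q x *\<^sub>R \<psi> x) + \<psi>' x \<bullet> \<psi>' x)) (at x within {\<alpha>..\<beta>})"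
      using inner_rd[OF d1[rule_format, OF x] d2[rule_format, OF x]] .
    have c: "((\<lambda>x. (ch x)\<^sup>2) has_real_derivative 2 * ch x * cd x) (at x within {\<alpha>..\<beta>})"
      unfolding ch_def cd_def by (auto intro!: derivative_eq_intros simp: algebra_simps)
    have "(F has_real_derivative ((ch x)\<^sup>2 * (\<psi> x \<bullet> (q x *\<^sub>R \<psi> x) + \<psi>' x \<bullet> \<psi>' x) + 2 * ch x * cd x * (\<psi> x \<bullet> \<psi>' x))) (at x within {\<alpha>..\<beta>})"
      unfolding F_def using DERIV_mult[OF c i] by (simp add: algebra_simps)
    moreover have "(ch x)\<^sup>2 * (\<psi> x \<bullet> (q x *\<^sub>R \<psi> x) + \<psi>' x \<bullet> \<psi>' x) + 2 * ch x * cd x * (\<psi> x \<bullet> \<psi>' x) = F' x"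
      unfolding F'_def by (simp add: power2_norm_eq_inner algebra_simps)
    ultimately show "(F has_vector_derivative F' x) (at x within {\<alpha>..\<beta>})"
      by (simp add: has_real_derivative_iff_has_vector_derivative)
  qed
  have iF: "(F' has_integral F \<beta> - F \<alpha>) {\<alpha>..\<beta>}"
    using fundamental_theorem_of_calculus[OF ab, of F F'] dF by blast
  have F0: "F \<beta> - F \<alpha> = 0" unfolding F_def ch_def by simp
  have cpsi: "continuous_on {\<alpha>..\<beta>} \<psi>" using vd_cont_on[OF d1] .
  have cn: "continuous_on {\<alpha>..\<beta>} (\<lambda>x. (norm (\<psi> x))\<^sup>2)"
    by (intro continuous_intros cpsi)
  have iJ: "((\<lambda>x. (norm (\<psi> x))\<^sup>2) has_integral integral {\<alpha>..\<beta>} (\<lambda>x. (norm (\<psi> x))\<^sup>2)) {\<alpha>..\<beta>}"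
    using integrable_continuous_interval[OF cn] by (simp add: integrable_integral)
  have ig: "((\<lambda>x. 2 * F' x + K * (norm (\<psi> x))\<^sup>2) has_integral (2 * 0 + K * integral {\<alpha>..\<beta>} (\<lambda>x. (norm (\<psi> x))\<^sup>2))) {\<alpha>..\<beta>}"
    by (intro has_integral_add has_integral_mult_right iJ) (use iF F0 in simp)
  have ic: "((\<lambda>x. m * (ch x)\<^sup>2) has_integral m * (l^5/30)) {\<alpha>..\<beta>}"
    unfolding ch_def l_def by (intro has_integral_mult_right chi_integral ab)
  have "m * (l^5/30) \<le> 2 * 0 + K * integral {\<alpha>..\<beta>} (\<lambda>x. (norm (\<psi> x))\<^sup>2)"
  proof (rule has_integral_le[OF ic ig])
    fix x assume x: "x \<in> {\<alpha>..\<beta>}"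
    have c2: "(ch x)\<^sup>2 \<le> l^4/16"
    proof -
      have "0 \<le> ch x" using x unfolding ch_def by auto
      moreover have "l\<^sup>2/4 - ch x = ((x - \<alpha>) - (\<beta> - x))\<^sup>2/4"
        unfolding ch_def l_def by (simp add: power2_eq_square field_simps)
      moreover have "((x - \<alpha>) - (\<beta> - x))\<^sup>2/4 \<ge> 0" by simp
      ultimately have "0 \<le> ch x" "ch x \<le> l\<^sup>2/4" by linarith+
      then have "(ch x)\<^sup>2 \<le> (l\<^sup>2/4)\<^sup>2" by (intro power_mono) auto
      then show ?thesis by (simp add: power2_eq_square power4_eq_xxxx)
    qed
    have c'2: "(cd x)\<^sup>2 \<le> l\<^sup>2"
    proof -
      have "\<bar>cd x\<bar> \<le> \<bar>l\<bar>" using x unfolding cd_def l_def by auto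
      then show ?thesis by (simp add: abs_le_square_iff)
    qed
    have "m * (ch x)\<^sup>2 \<le> 2 * (2 * ch x * cd x * (\<psi> x \<bullet> \<psi>' x) + (ch x)\<^sup>2 * ((norm (\<psi>' x))\<^sup>2 + q x * (norm (\<psi> x))\<^sup>2)) + (4 * l\<^sup>2 + Q * l^4 / 4) * (norm (\<psi> x))\<^sup>2"
      by (rule cacc_pointwise) (use x qb wb mb c2 c'2 Cauchy_Schwarz_ineq2 in auto)
    then show "m * (ch x)\<^sup>2 \<le> 2 * F' x + K * (norm (\<psi> x))\<^sup>2" unfolding F'_def K_def .
  qed
  then show ?thesis unfolding K_def l_def by simp
qed



lemma h_facts:
  fixes t \<eta> :: real
  assumes "\<eta> > 0"
  shows "sqrt (t\<^sup>2 + \<eta>\<^sup>2) \<ge> \<eta>" "sqrt (t\<^sup>2 + \<eta>\<^sup>2) \<ge> \<bar>t\<bar>" "sqrt (t\<^sup>2 + \<eta>\<^sup>2) \<le> \<bar>t\<bar> + \<eta>"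
proof -
  show "sqrt (t\<^sup>2 + \<eta>\<^sup>2) \<ge> \<eta>" using assms by (simp add: real_le_rsqrt)
  show "sqrt (t\<^sup>2 + \<eta>\<^sup>2) \<ge> \<bar>t\<bar>" by (simp add: real_le_rsqrt)
  have "t\<^sup>2 + \<eta>\<^sup>2 \<le> (\<bar>t\<bar> + \<eta>)\<^sup>2" using assms by (simp add: power2_eq_square algebra_simps)
  then show "sqrt (t\<^sup>2 + \<eta>\<^sup>2) \<le> \<bar>t\<bar> + \<eta>" using assms by (simp add: real_sqrt_le_iff real_le_lsqrt)
qed

lemma th_bound:
  fixes t \<eta> :: real
  assumes "\<eta> > 0"
  defines "h \<equiv> sqrt (t\<^sup>2 + \<eta>\<^sup>2)"
  shows "0 \<le> t + h" "(t + h) / sqrt h \<le> 2 * sqrt (max t 0) + sqrt \<eta>"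
proof -
  note hf = h_facts[OF assms(1), of t, folded h_def]
  show "0 \<le> t + h" using hf by linarith
  have sh: "sqrt h \<ge> sqrt \<eta>" "sqrt \<eta> > 0" using hf assms by auto
  have e1: "\<eta> / sqrt h \<le> sqrt \<eta>"
  proof -
    have "0 < sqrt h * sqrt \<eta>" using sh by (smt (verit) mult_pos_pos)
    then have "\<eta> / sqrt h \<le> \<eta> / sqrt \<eta>" using sh assms by (intro divide_left_mono) auto
    also have "\<eta> / sqrt \<eta> = sqrt \<eta>" using assms by (simp add: real_div_sqrt)
    finally show ?thesis .
  qed
  show "(t + h) / sqrt h \<le> 2 * sqrt (max t 0) + sqrt \<eta>"
  proof (cases "t \<le> 0")
    case True
    then have "t + h \<le> \<eta>" using hf by linarith
    then have "(t + h) / sqrt h \<le> \<eta> / sqrt h" using sh by (intro divide_right_mono) auto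
    then show ?thesis using e1 True by auto
  next
    case False
    then have tp: "t > 0" by simp
    have "t / sqrt h \<le> t / sqrt t"
      using hf tp by (intro divide_left_mono) (auto simp: real_sqrt_le_iff)
    also have "t / sqrt t = sqrt t" using tp by (simp add: real_div_sqrt)
    finally have e2: "t / sqrt h \<le> sqrt t" .
    have "t + h \<le> 2 * t + \<eta>" using hf tp by linarith
    then have "(t + h) / sqrt h \<le> (2 * t + \<eta>) / sqrt h" using sh by (intro divide_right_mono) auto
    also have "\<dots> = 2 * (t / sqrt h) + \<eta> / sqrt h" by (simp add: add_divide_distrib)
    finally show ?thesis using e1 e2 tp by auto
  qed
qed

lemma rate_bound:
  fixes a b T t \<eta> \<epsilon> e s h' M :: real
  assumes a: "a \<ge> 0" and b: "b \<ge> 0" and T: "\<bar>T\<bar> \<le> a * b" and ep: "\<epsilon> > 0" and et: "\<eta> > 0"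
    and e: "\<bar>e\<bar> \<le> 2 * s" and hM: "\<bar>h'\<bar> \<le> M"
  defines "h \<equiv> sqrt (t\<^sup>2 + \<eta>\<^sup>2)"
  shows "\<bar>2 * ((e + t + h) / \<epsilon>\<^sup>2) * T + (h' / \<epsilon>\<^sup>2) * a\<^sup>2\<bar>
         \<le> ((2 * sqrt (max t 0) + sqrt \<eta> + 2 * s / sqrt \<eta>) / \<epsilon> + M / \<eta>) * (b\<^sup>2 + (h / \<epsilon>\<^sup>2) * a\<^sup>2)"
proof -
  note hf = h_facts[OF et, of t, folded h_def]
  note tb = th_bound[OF et, of t, folded h_def]
  define \<Phi> where "\<Phi> = b\<^sup>2 + (h / \<epsilon>\<^sup>2) * a\<^sup>2"
  define A where "A = sqrt h / \<epsilon>"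
  have hpos: "h > 0" using hf et by linarith
  have Apos: "A > 0" unfolding A_def using hpos ep by auto
  have A2: "A\<^sup>2 = h / \<epsilon>\<^sup>2" unfolding A_def using hpos by (simp add: power_divide)
  have ab: "2 * a * b * A \<le> \<Phi>"
  proof -
    have "0 \<le> (b - A * a)\<^sup>2" by simp
    then show ?thesis unfolding \<Phi>_def A2[symmetric] by (simp add: power2_eq_square algebra_simps)
  qed
  have M0: "M \<ge> 0" using hM by linarith
  have Phi0: "\<Phi> \<ge> 0" unfolding \<Phi>_def using hpos by simp
  have sh: "sqrt h \<ge> sqrt \<eta>" "sqrt \<eta> > 0" using hf et by auto
  have s0: "s \<ge> 0" using e by linarith
  have q1: "\<bar>e + t + h\<bar> / sqrt h \<le> 2 * sqrt (max t 0) + sqrt \<eta> + 2 * s / sqrt \<eta>"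
  proof -
    have "\<bar>e + t + h\<bar> \<le> \<bar>e\<bar> + (t + h)" using tb by linarith
    then have "\<bar>e + t + h\<bar> / sqrt h \<le> (\<bar>e\<bar> + (t + h)) / sqrt h" using sh by (intro divide_right_mono) auto
    also have "\<dots> = \<bar>e\<bar> / sqrt h + (t + h) / sqrt h" by (simp add: add_divide_distrib)
    also have "\<bar>e\<bar> / sqrt h \<le> 2 * s / sqrt \<eta>"
    proof -
      have "\<bar>e\<bar> / sqrt h \<le> 2 * s / sqrt h" using e sh by (intro divide_right_mono) auto
      also have "\<dots> \<le> 2 * s / sqrt \<eta>" using sh s0 by (intro divide_left_mono) auto
      finally show ?thesis .
    qed
    finally show ?thesis using tb by linarith
  qed
  have t1: "\<bar>2 * ((e + t + h) / \<epsilon>\<^sup>2) * T\<bar> \<le> ((2 * sqrt (max t 0) + sqrt \<eta> + 2 * s / sqrt \<eta>) / \<epsilon>) * \<Phi>"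
  proof -
    have "\<bar>2 * ((e + t + h) / \<epsilon>\<^sup>2) * T\<bar> = 2 * (\<bar>e + t + h\<bar> / \<epsilon>\<^sup>2) * \<bar>T\<bar>" by (simp only: abs_mult abs_divide) simp
    also have "\<dots> \<le> 2 * (\<bar>e + t + h\<bar> / \<epsilon>\<^sup>2) * (a * b)" using T by (intro mult_left_mono) auto
    also have "\<dots> = (\<bar>e + t + h\<bar> / sqrt h / \<epsilon>) * (2 * a * b * A)"
      unfolding A_def using hpos ep by (simp add: power2_eq_square field_simps)
    also have "\<dots> \<le> (\<bar>e + t + h\<bar> / sqrt h / \<epsilon>) * \<Phi>" using ab ep hpos by (intro mult_left_mono) auto
    also have "\<dots> \<le> ((2 * sqrt (max t 0) + sqrt \<eta> + 2 * s / sqrt \<eta>) / \<epsilon>) * \<Phi>"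
      using q1 ep Phi0 by (intro mult_right_mono divide_right_mono) auto
    finally show ?thesis .
  qed
  have t2: "\<bar>(h' / \<epsilon>\<^sup>2) * a\<^sup>2\<bar> \<le> (M / \<eta>) * \<Phi>"
  proof -
    have "\<bar>(h' / \<epsilon>\<^sup>2) * a\<^sup>2\<bar> = (\<bar>h'\<bar> / h) * ((h / \<epsilon>\<^sup>2) * a\<^sup>2)" using hpos by (simp add: abs_mult field_simps)
    also have "\<dots> \<le> (M / \<eta>) * ((h / \<epsilon>\<^sup>2) * a\<^sup>2)"
    proof (rule mult_right_mono)
      have "\<bar>h'\<bar> / h \<le> M / h" using hM hpos by (intro divide_right_mono) auto
      also have "\<dots> \<le> M / \<eta>" using M0 hf et by (intro divide_left_mono) auto
      finally show "\<bar>h'\<bar> / h \<le> M / \<eta>" .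
    qed (use hpos in simp)
    also have "\<dots> \<le> (M / \<eta>) * \<Phi>" unfolding \<Phi>_def using M0 et by (intro mult_left_mono) auto
    finally show ?thesis .
  qed
  have "\<bar>2 * ((e + t + h) / \<epsilon>\<^sup>2) * T + (h' / \<epsilon>\<^sup>2) * a\<^sup>2\<bar> \<le> ((2 * sqrt (max t 0) + sqrt \<eta> + 2 * s / sqrt \<eta>) / \<epsilon>) * \<Phi> + (M / \<eta>) * \<Phi>"
    using t1 t2 by linarith
  then show ?thesis unfolding \<Phi>_def by (simp add: algebra_simps)
qed



lemma inner_rd':
  fixes f g :: "real \<Rightarrow> 'a::real_inner"
  assumes "(f has_vector_derivative f') (at x within s)" "(g has_vector_derivative g') (at x within s)"
  shows "((\<lambda>x. f x \<bullet> g x) has_real_derivative (f x \<bullet> g' + f' \<bullet> g x)) (at x within s)"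
  using bounded_bilinear.has_vector_derivative[OF bounded_bilinear_inner assms]
  by (simp add: has_real_derivative_iff_has_vector_derivative)

lemma deriv_sub:
  fixes f :: "real \<Rightarrow> real"
  assumes "\<forall>x\<in>{0..L}. (f has_real_derivative f' x) (at x within {0..L})" "0 \<le> a" "b \<le> L"
  shows "\<forall>x\<in>{a..b}. (f has_real_derivative f' x) (at x within {a..b})"
proof
  fix x assume x: "x \<in> {a..b}"
  have "{a..b} \<subseteq> {0..L}" using assms by auto
  then show "(f has_real_derivative f' x) (at x within {a..b})"
    using has_field_derivative_subset[OF assms(1)[rule_format]] x by auto
qed

lemma phi_lower:
  fixes V V' W G :: "real \<Rightarrow> real" and \<psi> \<psi>' :: "real \<Rightarrow> complex"
  assumes ep: "\<epsilon> > 0" and et: "\<eta> > 0"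
    and V_deriv: "\<forall>x\<in>{0..L}. (V has_real_derivative V' x) (at x within {0..L})"
    and VM: "\<forall>x\<in>{0..L}. \<bar>V' x\<bar> \<le> M"
    and d1: "\<forall>x\<in>{0..L}. (\<psi> has_vector_derivative \<psi>' x) (at x within {0..L})"
    and d2: "\<forall>x\<in>{0..L}. (\<psi>' has_vector_derivative (((W x - E) / \<epsilon>\<^sup>2) *\<^sub>R \<psi> x)) (at x within {0..L})"
    and Ws: "\<forall>x\<in>{0..L}. \<bar>W x - V x\<bar> \<le> s"
    and EE: "E \<le> E'" "E' - E \<le> s"
    and dG: "\<forall>x\<in>{0..L}. (G has_real_derivative sqrt (max (V x - E') 0)) (at x within {0..L})"
    and p: "p \<in> {0..L}" and x: "x \<in> {0..L}"
  defines "\<Phi> \<equiv> \<lambda>y. (norm (\<psi>' y))\<^sup>2 + (sqrt ((V y - E')\<^sup>2 + \<eta>\<^sup>2) / \<epsilon>\<^sup>2) * (norm (\<psi> y))\<^sup>2"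
    and "c \<equiv> (sqrt \<eta> + 2 * s / sqrt \<eta>) / \<epsilon> + M / \<eta>"
  shows "\<Phi> p * exp (- ((2 / \<epsilon>) * \<bar>G x - G p\<bar> + c * \<bar>x - p\<bar>)) \<le> \<Phi> x"
proof -
  define h where "h y = sqrt ((V y - E')\<^sup>2 + \<eta>\<^sup>2)" for y
  define h' where "h' y = (V y - E') * V' y / h y" for y
  define q where "q y = (W y - E) / \<epsilon>\<^sup>2" for y
  define g where "g y = sqrt (max (V y - E') 0)" for y
  define R where "R y = (2 / \<epsilon>) * G y + c * y" for y
  define r where "r y = (2 / \<epsilon>) * g y + c" for y
  define P' where "P' y = 2 * q y * (\<psi> y \<bullet> \<psi>' y) + (h' y / \<epsilon>\<^sup>2) * (\<psi> y \<bullet> \<psi> y) + (h y / \<epsilon>\<^sup>2) * (2 * (\<psi> y \<bullet> \<psi>' y))" for y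
  have hpos: "h y > 0" for y unfolding h_def using et by (simp add: add_nonneg_pos)
  have Phi_eq: "\<Phi> y = \<psi>' y \<bullet> \<psi>' y + (h y / \<epsilon>\<^sup>2) * (\<psi> y \<bullet> \<psi> y)" for y
    unfolding \<Phi>_def h_def by (simp add: power2_norm_eq_inner)
  have dh: "(h has_real_derivative h' y) (at y within {0..L})" if y: "y \<in> {0..L}" for y
  proof -
    have "(h has_real_derivative (inverse (sqrt ((V y - E')\<^sup>2 + \<eta>\<^sup>2)) / 2 * (2 * (V y - E') * V' y))) (at y within {0..L})"
    proof -
      have i: "((\<lambda>y. (V y - E')\<^sup>2 + \<eta>\<^sup>2) has_real_derivative 2 * (V y - E') * V' y) (at y within {0..L})"
        using V_deriv[rule_format, OF y] by (auto intro!: derivative_eq_intros)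
      have "0 < (V y - E')\<^sup>2 + \<eta>\<^sup>2" using et by (simp add: add_nonneg_pos)
      from DERIV_chain2[OF DERIV_real_sqrt[OF this] i] show ?thesis unfolding h_def by simp
    qed
    moreover have "inverse (sqrt ((V y - E')\<^sup>2 + \<eta>\<^sup>2)) / 2 * (2 * (V y - E') * V' y) = h' y"
    proof -
      have gen: "inverse z / 2 * (2 * a * b) = a * b / z" for z a b :: real by (cases "z = 0") (simp_all add: field_simps)
      show ?thesis unfolding h'_def h_def by (rule gen)
    qed
    ultimately show ?thesis by simp
  qed
  have dP: "((\<lambda>y. \<Phi> y) has_real_derivative P' y) (at y within {0..L})" if y: "y \<in> {0..L}" for y
  proof -
    have a1: "((\<lambda>y. \<psi>' y \<bullet> \<psi>' y) has_real_derivative 2 * q y * (\<psi> y \<bullet> \<psi>' y)) (at y within {0..L})"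
      using inner_rd'[OF d2[rule_format, OF y] d2[rule_format, OF y]]
      by (simp add: q_def inner_commute algebra_simps)
    have a2: "((\<lambda>y. \<psi> y \<bullet> \<psi> y) has_real_derivative 2 * (\<psi> y \<bullet> \<psi>' y)) (at y within {0..L})"
      using inner_rd'[OF d1[rule_format, OF y] d1[rule_format, OF y]]
      by (simp add: inner_commute)
    have a3: "((\<lambda>y. h y / \<epsilon>\<^sup>2) has_real_derivative h' y / \<epsilon>\<^sup>2) (at y within {0..L})"
      using DERIV_cdivide[OF dh[OF y], of "\<epsilon>\<^sup>2"] .
    have "((\<lambda>y. \<psi>' y \<bullet> \<psi>' y + (h y / \<epsilon>\<^sup>2) * (\<psi> y \<bullet> \<psi> y)) has_real_derivative
           2 * q y * (\<psi> y \<bullet> \<psi>' y) + (h' y / \<epsilon>\<^sup>2 * (\<psi> y \<bullet> \<psi> y) + 2 * (\<psi> y \<bullet> \<psi>' y) * (h y / \<epsilon>\<^sup>2))) (at y within {0..L})"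
      by (rule DERIV_add[OF a1 DERIV_mult[OF a3 a2]])
    then show ?thesis unfolding Phi_eq[abs_def] P'_def by (simp add: algebra_simps)
  qed
  have bd: "\<bar>P' y\<bar> \<le> r y * \<Phi> y" if y: "y \<in> {0..L}" for y
  proof -
    have hM: "\<bar>h' y\<bar> \<le> M"
    proof -
      have "\<bar>h' y\<bar> = (\<bar>V y - E'\<bar> / h y) * \<bar>V' y\<bar>" unfolding h'_def using hpos[of y] by (simp add: abs_mult)
      also have "\<dots> \<le> 1 * \<bar>V' y\<bar>"
        using h_facts(2)[OF et, of "V y - E'"] hpos[of y] by (intro mult_right_mono) (auto simp: h_def)
      moreover have "\<bar>V' y\<bar> \<le> M" using VM y by blast
      ultimately show ?thesis by linarith
    qed
    have e: "\<bar>W y - V y + (E' - E)\<bar> \<le> 2 * s" using Ws y EE by (smt (verit) ballE)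
    have "\<bar>2 * ((W y - V y + (E' - E) + (V y - E') + h y) / \<epsilon>\<^sup>2) * (\<psi> y \<bullet> \<psi>' y) + (h' y / \<epsilon>\<^sup>2) * (norm (\<psi> y))\<^sup>2\<bar>
         \<le> ((2 * sqrt (max (V y - E') 0) + sqrt \<eta> + 2 * s / sqrt \<eta>) / \<epsilon> + M / \<eta>) * ((norm (\<psi>' y))\<^sup>2 + (h y / \<epsilon>\<^sup>2) * (norm (\<psi> y))\<^sup>2)"
      unfolding h_def
      by (rule rate_bound[OF norm_ge_zero norm_ge_zero Cauchy_Schwarz_ineq2 ep et e hM[unfolded h_def]])
    moreover have "2 * ((W y - V y + (E' - E) + (V y - E') + h y) / \<epsilon>\<^sup>2) * (\<psi> y \<bullet> \<psi>' y) + (h' y / \<epsilon>\<^sup>2) * (norm (\<psi> y))\<^sup>2 = P' y"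
      using ep unfolding P'_def q_def by (simp add: power2_norm_eq_inner field_simps)
    moreover have "((2 * sqrt (max (V y - E') 0) + sqrt \<eta> + 2 * s / sqrt \<eta>) / \<epsilon> + M / \<eta>) = r y"
      unfolding r_def g_def c_def by (simp add: add_divide_distrib)
    moreover have "(norm (\<psi>' y))\<^sup>2 + (h y / \<epsilon>\<^sup>2) * (norm (\<psi> y))\<^sup>2 = \<Phi> y"
      unfolding \<Phi>_def h_def by simp
    ultimately show ?thesis by simp
  qed
  have dR: "(R has_real_derivative r y) (at y within {0..L})" if y: "y \<in> {0..L}" for y
    unfolding R_def r_def g_def using dG y ep by (auto intro!: derivative_eq_intros)
  have g0: "g y \<ge> 0" for y unfolding g_def by simp
  have Gmono: "G a \<le> G b" if "0 \<le> a" "a \<le> b" "b \<le> L" for a b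
  proof (rule mono_deriv[of a b G g])
    show "\<forall>x\<in>{a..b}. (G has_real_derivative g x) (at x within {a..b})"
      using deriv_sub[OF dG that(1,3)] unfolding g_def .
  qed (use that g0 in auto)
  have sub: "{a..b} \<subseteq> {0..L}" if "0 \<le> a" "b \<le> L" for a b :: real using that by auto
  show ?thesis
  proof (cases "p \<le> x")
    case True
    have "\<Phi> x \<ge> \<Phi> p * exp (R p - R x)"
      by (rule gronwall2(1)[OF True, of \<Phi> P' R r])
         (use deriv_sub[of L \<Phi> P' p x] deriv_sub[of L R r p x] dP dR bd p x in auto)
    moreover have "R p - R x = - ((2 / \<epsilon>) * \<bar>G x - G p\<bar> + c * \<bar>x - p\<bar>)"
      using Gmono[of p x] p x True unfolding R_def by (auto simp: algebra_simps diff_divide_distrib)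
    ultimately show ?thesis by simp
  next
    case False
    then have xp: "x \<le> p" by simp
    have "\<Phi> x \<ge> \<Phi> p * exp (R x - R p)"
      by (rule gronwall2(2)[OF xp, of \<Phi> P' R r])
         (use deriv_sub[of L \<Phi> P' x p] deriv_sub[of L R r x p] dP dR bd p x in auto)
    moreover have "R x - R p = - ((2 / \<epsilon>) * \<bar>G x - G p\<bar> + c * \<bar>x - p\<bar>)"
      using Gmono[of x p] p x xp unfolding R_def by (auto simp: algebra_simps diff_divide_distrib)
    ultimately show ?thesis by simp
  qed
qed





lemma integrable_sub_interval:
  fixes f :: "real \<Rightarrow> real"
  assumes "continuous_on {0..L} f" "\<forall>x\<in>{0..L}. f x \<ge> 0" "is_interval U" "U \<subseteq> {0..L}"
  shows "f integrable_on U"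
proof -
  have "f absolutely_integrable_on {0..L}"
    using assms(1,2) integrable_continuous_interval nonnegative_absolutely_integrable_1 by blast
  moreover have "U \<in> sets lebesgue"
    using measurable_convex[of U] assms(3,4) is_interval_convex_1 bounded_subset[OF bounded_closed_interval]
    by (metis fmeasurableD bounded_cbox cbox_interval)
  ultimately have "f absolutely_integrable_on U"
    using set_integrable_subset assms(4) by blast
  then show ?thesis using absolutely_integrable_on_def by blast
qed

lemma lip_deriv:
  fixes G g :: "real \<Rightarrow> real"
  assumes "a \<le> b" "\<forall>x\<in>{a..b}. (G has_real_derivative g x) (at x within {a..b})"
    "\<forall>x\<in>{a..b}. 0 \<le> g x \<and> g x \<le> C"
  shows "0 \<le> G b - G a" "G b - G a \<le> C * (b - a)"
proof -
  show "0 \<le> G b - G a" using mono_deriv[OF assms(1,2)] assms(3) by auto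
  have "\<forall>x\<in>{a..b}. ((\<lambda>x. C * x - G x) has_real_derivative C - g x) (at x within {a..b})"
    using assms(2) by (auto intro!: derivative_eq_intros)
  from mono_deriv[OF assms(1) this] assms(3) have "C * a - G a \<le> C * b - G b" by auto
  then show "G b - G a \<le> C * (b - a)" by (simp add: algebra_simps)
qed

lemma interval_int_G:
  fixes g :: "real \<Rightarrow> real"
  assumes "continuous_on {0..L} g" "x \<in> {0..L}" "y \<in> {0..L}"
  shows "\<bar>interval_int g y x\<bar> = \<bar>integral {0..x} g - integral {0..y} g\<bar>"
proof -
  have ii: "g integrable_on {0..z}" if "z \<le> L" for z
    using integrable_continuous_interval[OF continuous_on_subset[OF assms(1)]] that by auto
  show ?thesis
proof (cases "y \<le> x")
  case True
  have "integral {0..y} g + integral {y..x} g = integral {0..x} g"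
    by (rule Henstock_Kurzweil_Integration.integral_combine) (use assms True ii in auto)
  then show ?thesis using True unfolding interval_int_def by auto
next
  case False
  have "integral {0..x} g + integral {x..y} g = integral {0..y} g"
    by (rule Henstock_Kurzweil_Integration.integral_combine) (use assms False ii in auto)
  then show ?thesis using False unfolding interval_int_def by auto
qed
qed

lemma cont_bdd:
  fixes f :: "real \<Rightarrow> real"
  shows "continuous_on {a..b} f \<Longrightarrow> bdd_above (f ` {a..b})"
  by (meson bounded_imp_bdd_above compact_Icc compact_continuous_image compact_imp_bounded)





lemma exp_final:
  fixes A \<epsilon> X Y Z :: real
  assumes "A > 0" "\<epsilon> > 0" "\<epsilon> * (Y + \<bar>ln A\<bar>) \<le> Z - X"
  shows "exp (- Z / \<epsilon>) \<le> A * exp (- (X / \<epsilon> + Y))"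
proof -
  have "A * exp (- (X / \<epsilon> + Y)) = exp (ln A - (X / \<epsilon> + Y))"
    using assms(1) by (simp add: exp_diff exp_add exp_minus field_simps)
  moreover have "- Z / \<epsilon> \<le> ln A - (X / \<epsilon> + Y)"
  proof -
    have "Y + \<bar>ln A\<bar> \<le> (Z - X) / \<epsilon>" using assms(2,3) by (simp add: field_simps)
    moreover have "\<epsilon> * (- \<bar>ln A\<bar>) \<le> \<epsilon> * ln A" using assms(2) by (intro mult_left_mono) auto
    ultimately show ?thesis using assms(2) by (simp add: field_simps)
  qed
  ultimately show ?thesis by simp
qed



theorem theorem1p2:
  fixes L :: real and V V' :: "real \<Rightarrow> real"
    and Veps Veps' :: "real \<Rightarrow> real \<Rightarrow> real" and x0 :: real
    and U :: "real set" and \<delta> :: real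
  assumes L_pos: "L > 0"
    and V_deriv: "\<forall>x\<in>{0..L}. (V has_real_derivative V' x) (at x within {0..L})"
    and V'_cont: "continuous_on {0..L} V'"
    and Veps_deriv: "\<forall>e\<in>{0<..1}. \<forall>x\<in>{0..L}.
                       (Veps e has_real_derivative Veps' e x) (at x within {0..L})"
    and Veps'_cont: "\<forall>e\<in>{0<..1}. continuous_on {0..L} (Veps' e)"
    and C1_conv: "((\<lambda>e. (SUP x\<in>{0..L}. \<bar>V x - Veps e x\<bar>) + (SUP x\<in>{0..L}. \<bar>V' x - Veps' e x\<bar>))
                    \<longlongrightarrow> 0) (at_right 0)"
    and x0_in: "x0 \<in> {0<..<L}"
    and crit: "\<forall>x\<in>{0..L}. V' x = 0 \<longleftrightarrow> x = x0"
    and x0_min: "\<forall>x\<in>{0..L}. V x0 \<le> V x"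
    and U_int: "is_interval U" and U_sub: "U \<subseteq> {0..L}" and U_ne: "interior U \<noteq> {}"
    and \<delta>_pos: "\<delta> > 0"
  shows "\<exists>\<epsilon>0>0. \<epsilon>0 \<le> 1 \<and>
    (\<forall>\<epsilon> E (\<psi>::real \<Rightarrow> complex) \<psi>' \<psi>''.
       0 < \<epsilon> \<and> \<epsilon> < \<epsilon>0 \<and>
       (\<forall>x\<in>{0..L}. (\<psi> has_vector_derivative \<psi>' x) (at x within {0..L}) \<and>
                    (\<psi>' has_vector_derivative \<psi>'' x) (at x within {0..L}) \<and>
                    - complex_of_real (\<epsilon>\<^sup>2) * \<psi>'' x + complex_of_real (Veps \<epsilon> x) * \<psi> x
                      = complex_of_real E * \<psi> x) \<and>
       \<psi> 0 = 0 \<and> \<psi> L = 0 \<and>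
       integral {0..L} (\<lambda>x. (cmod (\<psi> x))\<^sup>2) = 1
     \<longrightarrow>
       sqrt (integral U (\<lambda>x. (cmod (\<psi> x))\<^sup>2))
         \<ge> exp (- (1 / \<epsilon>) * ((INF x\<in>U. agmon_dist V L E x) + \<delta>)) \<and>
       \<epsilon> / sqrt (\<bar>E\<bar> + 1) * cmod (\<psi>' 0) \<ge> exp (- (1 / \<epsilon>) * (agmon_dist V L E 0 + \<delta>)) \<and>
       \<epsilon> / sqrt (\<bar>E\<bar> + 1) * cmod (\<psi>' L) \<ge> exp (- (1 / \<epsilon>) * (agmon_dist V L E L + \<delta>)))"
proof -
  define E0 where "E0 = V x0"
  have x0L: "x0 \<in> {0..L}" using x0_in by auto
  have InfV: "Inf (V ` {0..L}) = E0"
    unfolding E0_def by (rule cInf_eq_minimum) (use x0L x0_min in auto)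
  have Vcont: "continuous_on {0..L} V" using deriv_cont_on[OF V_deriv] .
  obtain B0 where B0: "B0 \<in> {0..L}" "\<forall>y\<in>{0..L}. \<bar>V y\<bar> \<le> \<bar>V B0\<bar>"
    using continuous_attains_sup[OF compact_Icc _ continuous_on_rabs[OF Vcont]] L_pos by auto
  define B where "B = \<bar>V B0\<bar>"
  have B: "\<forall>y\<in>{0..L}. \<bar>V y\<bar> \<le> B" "B \<ge> 0" using B0 unfolding B_def by auto
  obtain M0 where M0: "M0 \<in> {0..L}" "\<forall>y\<in>{0..L}. \<bar>V' y\<bar> \<le> \<bar>V' M0\<bar>"
    using continuous_attains_sup[OF compact_Icc _ continuous_on_rabs[OF V'_cont]] L_pos by auto
  define M where "M = \<bar>V' M0\<bar>"
  have M: "\<forall>y\<in>{0..L}. \<bar>V' y\<bar> \<le> M" "M \<ge> 0" using M0 unfolding M_def by auto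
  have E0B: "\<bar>E0\<bar> \<le> B" using B x0L unfolding E0_def by auto
  obtain z0 where "z0 \<in> interior U" using U_ne by auto
  then obtain r0 where r0: "r0 > 0" "ball z0 r0 \<subseteq> U" using mem_interior by blast
  define \<tau> where "\<tau> = \<delta> / 16"
  define s\<eta> where "s\<eta> = min 1 (\<delta> / (4 * L))"
  define \<eta> where "\<eta> = s\<eta>\<^sup>2"
  have se_pos: "s\<eta> > 0" unfolding s\<eta>_def using \<delta>_pos L_pos by auto
  have eta_pos: "\<eta> > 0" unfolding \<eta>_def using se_pos by auto
  have sqrt_eta: "sqrt \<eta> = s\<eta>" unfolding \<eta>_def using se_pos by simp
  have seL: "s\<eta> * L \<le> \<delta> / 4" unfolding s\<eta>_def using L_pos by (simp add: min_def field_simps)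
  define Gm where "Gm = sqrt (2 * B)"
  have Gm0: "Gm \<ge> 0" unfolding Gm_def using B by simp
  define ll where "ll = min (r0 / 2) (\<delta> / (8 * (Gm + 1)))"
  have l_pos: "ll > 0" unfolding ll_def using r0 \<delta>_pos Gm0 by auto
  have l_r: "ll \<le> r0 / 2" unfolding ll_def by (rule min.cobounded1)
  have Gml: "Gm * ll \<le> \<delta> / 8"
  proof -
    have "ll \<le> \<delta> / (8 * (Gm + 1))" unfolding ll_def by simp
    then have "ll * (8 * (Gm + 1)) \<le> \<delta>" using Gm0 by (simp add: field_simps)
    then show ?thesis using l_pos by (simp add: algebra_simps)
  qed
  define s0 where "s0 = min 1 (min ((\<delta> / (8 * L))\<^sup>2) (\<delta> * s\<eta> / (8 * L)))"
  have s0_pos: "s0 > 0" unfolding s0_def using \<delta>_pos L_pos se_pos by auto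
  define \<kappa> where "\<kappa> = min (\<eta> / (2 * B + 4)) (1 / 2)"
  have kappa_pos: "\<kappa> > 0" unfolding \<kappa>_def using eta_pos B by auto
  define C3 where "C3 = 2 * B + 2 + \<eta>"
  have C3_pos: "C3 > 0" unfolding C3_def using B eta_pos by auto
  define A1 where "A1 = \<kappa> / L"
  define Den where "Den = 4 * ll\<^sup>2 + C3 * ll^4 / 4"
  have Den_pos: "Den > 0" unfolding Den_def using l_pos C3_pos by (simp add: add_pos_nonneg)
  define A2 where "A2 = \<kappa> * ll^5 / (30 * L * Den)"
  have A1_pos: "A1 > 0" unfolding A1_def using kappa_pos L_pos by auto
  have A2_pos: "A2 > 0" unfolding A2_def using kappa_pos L_pos Den_pos l_pos by auto
  define K0 where "K0 = M * L / \<eta> + \<bar>ln A1\<bar> + \<bar>ln A2\<bar> + 1"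
  have K0_pos: "K0 > 0"
  proof -
    have "M * L / \<eta> \<ge> 0" using M L_pos eta_pos by simp
    then show ?thesis unfolding K0_def by linarith
  qed
  have "eventually (\<lambda>e. (SUP x\<in>{0..L}. \<bar>V x - Veps e x\<bar>) + (SUP x\<in>{0..L}. \<bar>V' x - Veps' e x\<bar>) < s0) (at_right 0)"
    using order_tendstoD(2)[OF C1_conv s0_pos] .
  then obtain e1 where e1: "e1 > 0" "\<forall>e>0. e < e1 \<longrightarrow> (SUP x\<in>{0..L}. \<bar>V x - Veps e x\<bar>) + (SUP x\<in>{0..L}. \<bar>V' x - Veps' e x\<bar>) < s0"
    unfolding eventually_at_right_field by auto
  define \<epsilon>0 where "\<epsilon>0 = min 1 (min e1 (3 * \<delta> / (4 * K0)))"
  have e0_pos: "\<epsilon>0 > 0" unfolding \<epsilon>0_def using e1 \<delta>_pos K0_pos by auto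
  show ?thesis
  proof (intro exI[of _ \<epsilon>0] conjI allI impI)
    show "\<epsilon>0 > 0" "\<epsilon>0 \<le> 1" using e0_pos unfolding \<epsilon>0_def by auto
  next
    fix \<epsilon> E and \<psi> :: "real \<Rightarrow> complex" and \<psi>' \<psi>''
    assume hyp: "0 < \<epsilon> \<and> \<epsilon> < \<epsilon>0 \<and>
       (\<forall>x\<in>{0..L}. (\<psi> has_vector_derivative \<psi>' x) (at x within {0..L}) \<and>
                    (\<psi>' has_vector_derivative \<psi>'' x) (at x within {0..L}) \<and>
                    - complex_of_real (\<epsilon>\<^sup>2) * \<psi>'' x + complex_of_real (Veps \<epsilon> x) * \<psi> x
                      = complex_of_real E * \<psi> x) \<and>
       \<psi> 0 = 0 \<and> \<psi> L = 0 \<and>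
       integral {0..L} (\<lambda>x. (cmod (\<psi> x))\<^sup>2) = 1"
    have ep: "\<epsilon> > 0" "\<epsilon> < \<epsilon>0" using hyp by auto
    have ep1: "\<epsilon> \<le> 1" "\<epsilon> < e1" "\<epsilon> * K0 < 3 * \<delta> / 4"
      using ep unfolding \<epsilon>0_def using K0_pos by (auto simp: field_simps)
    define W where "W = Veps \<epsilon>"
    have epI: "\<epsilon> \<in> {0<..1}" using ep ep1 by auto
    have Wd: "\<forall>x\<in>{0..L}. (W has_real_derivative Veps' \<epsilon> x) (at x within {0..L})"
      using Veps_deriv epI unfolding W_def by auto
    have Wcont: "continuous_on {0..L} W" using deriv_cont_on[OF Wd] .
    define s where "s = (SUP x\<in>{0..L}. \<bar>V x - W x\<bar>)"
    have Ws: "\<forall>x\<in>{0..L}. \<bar>W x - V x\<bar> \<le> s"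
    proof
      fix x assume x: "x \<in> {0..L}"
      have "bdd_above ((\<lambda>x. \<bar>V x - W x\<bar>) ` {0..L})"
        by (rule cont_bdd) (intro continuous_intros Vcont Wcont)
      from cSUP_upper[OF x this] show "\<bar>W x - V x\<bar> \<le> s" unfolding s_def by (simp add: abs_minus_commute)
    qed
    have s_nonneg: "s \<ge> 0" using Ws L_pos by (smt (verit) atLeastAtMost_iff)
    have s_lt: "s < s0"
    proof -
      have "bdd_above ((\<lambda>x. \<bar>V' x - Veps' \<epsilon> x\<bar>) ` {0..L})"
        by (rule cont_bdd) (use Veps'_cont epI in \<open>intro continuous_intros V'_cont, auto\<close>)
      then have "0 \<le> (SUP x\<in>{0..L}. \<bar>V' x - Veps' \<epsilon> x\<bar>)"
        by (rule cSUP_upper2[of _ _ 0]) (use L_pos in auto)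
      moreover have "(SUP x\<in>{0..L}. \<bar>V x - Veps \<epsilon> x\<bar>) + (SUP x\<in>{0..L}. \<bar>V' x - Veps' \<epsilon> x\<bar>) < s0"
        using e1(2) ep ep1 by auto
      ultimately show ?thesis unfolding s_def W_def by linarith
    qed
    have sqrt_s: "sqrt s * L \<le> \<delta> / 8"
    proof -
      have "s \<le> (\<delta> / (8 * L))\<^sup>2" using s_lt unfolding s0_def by auto
      then have "sqrt s \<le> \<delta> / (8 * L)" using \<delta>_pos L_pos by (intro real_le_lsqrt) auto
      then show ?thesis using L_pos by (simp add: field_simps)
    qed
    have sse: "2 * s / s\<eta> * L \<le> \<delta> / 4"
    proof -
      have "s \<le> \<delta> * s\<eta> / (8 * L)" using s_lt unfolding s0_def by auto
      then show ?thesis using L_pos se_pos by (simp add: field_simps)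
    qed
    have s1: "s \<le> 1" using s_lt unfolding s0_def by auto
    have d1: "\<forall>x\<in>{0..L}. (\<psi> has_vector_derivative \<psi>' x) (at x within {0..L})" using hyp by auto
    have ode: "\<psi>'' x = ((W x - E) / \<epsilon>\<^sup>2) *\<^sub>R \<psi> x" if x: "x \<in> {0..L}" for x
    proof -
      have eq: "- complex_of_real (\<epsilon>\<^sup>2) * \<psi>'' x + complex_of_real (W x) * \<psi> x = complex_of_real E * \<psi> x"
        using hyp x unfolding W_def by auto
      then have "complex_of_real (\<epsilon>\<^sup>2) * \<psi>'' x = complex_of_real (W x - E) * \<psi> x"
        by (simp add: algebra_simps)
      then have "complex_of_real (1 / \<epsilon>\<^sup>2) * (complex_of_real (\<epsilon>\<^sup>2) * \<psi>'' x) = complex_of_real (1 / \<epsilon>\<^sup>2) * (complex_of_real (W x - E) * \<psi> x)"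
        by simp
      then have "\<psi>'' x = complex_of_real ((W x - E) / \<epsilon>\<^sup>2) * \<psi> x"
        using ep by (simp add: field_simps)
      then show ?thesis by (simp add: scaleR_conv_of_real)
    qed
    have d2: "\<forall>x\<in>{0..L}. (\<psi>' has_vector_derivative (((W x - E) / \<epsilon>\<^sup>2) *\<^sub>R \<psi> x)) (at x within {0..L})"
      using hyp ode by auto
    obtain p where p: "p \<in> {0..L}" "(W p - E) / \<epsilon>\<^sup>2 \<le> 0" "(norm (\<psi> p))\<^sup>2 \<ge> 1 / L"
      using maxpoint[OF L_pos d1 d2] hyp by auto
    have WpE: "W p \<le> E" using p(2) ep by (simp add: divide_le_0_iff)
    define E' where "E' = max E E0"
    have EE: "E \<le> E'" "E' - E \<le> s" "V p \<le> E' + s"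
    proof -
      show "E \<le> E'" unfolding E'_def by simp
      have "E0 \<le> V p" using x0_min p unfolding E0_def by auto
      moreover have "V p \<le> W p + s" using Ws p by (smt (verit))
      ultimately show "E' - E \<le> s" "V p \<le> E' + s" using WpE s_nonneg unfolding E'_def by auto
    qed
    have E'B: "\<bar>E'\<bar> \<le> \<bar>E\<bar> + B" using E0B unfolding E'_def by auto
    define g where "g = (\<lambda>s. sqrt (max (V s - max E (Inf (V ` {0..L}))) 0))"
    have g_eq: "g y = sqrt (max (V y - E') 0)" for y unfolding g_def E'_def InfV by simp
    have gcont: "continuous_on {0..L} g" unfolding g_def by (intro continuous_intros Vcont)
    define G where "G y = integral {0..y} g" for y
    have dG: "\<forall>x\<in>{0..L}. (G has_real_derivative g x) (at x within {0..L})"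
      unfolding G_def using integral_has_real_derivative[OF gcont] by auto
    have g_bd: "\<forall>y\<in>{0..L}. 0 \<le> g y \<and> g y \<le> Gm"
    proof
      fix y assume y: "y \<in> {0..L}"
      have "max (V y - E') 0 \<le> 2 * B" using B y E0B unfolding E'_def by (smt (verit))
      then show "0 \<le> g y \<and> g y \<le> Gm" unfolding g_eq Gm_def by (auto intro: real_sqrt_le_mono)
    qed
    have Glip: "\<bar>G a - G b\<bar> \<le> C * \<bar>a - b\<bar>" if "a \<in> {0..L}" "b \<in> {0..L}" "\<forall>z\<in>{min a b..max a b}. g z \<le> C" for a b C
    proof (cases "a \<le> b")
      case True
      have "\<forall>z\<in>{a..b}. 0 \<le> g z \<and> g z \<le> C" using that g_bd True by auto
      from lip_deriv[OF True deriv_sub[OF dG] this] that True show ?thesis by auto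
    next
      case False
      have "\<forall>z\<in>{b..a}. 0 \<le> g z \<and> g z \<le> C" using that g_bd False by auto
      from lip_deriv[OF _ deriv_sub[OF dG] this] that False show ?thesis by auto
    qed
    define K where "K = {y \<in> {0..L}. V y \<le> E'}"
    have agm: "\<exists>y\<in>K. \<bar>G x - G y\<bar> < agmon_dist V L E x + \<tau>" if x: "x \<in> {0..L}" for x
    proof -
      have ad: "agmon_dist V L E x = Inf ((\<lambda>y. \<bar>interval_int g y x\<bar>) ` K)"
        unfolding agmon_dist_def Let_def K_def g_def E'_def InfV by simp
      have "K \<noteq> {}" using x0L EE unfolding K_def E'_def E0_def by auto
      moreover have "\<tau> > 0" unfolding \<tau>_def using \<delta>_pos by simp
      ultimately obtain y where y: "y \<in> K" "\<bar>interval_int g y x\<bar> < agmon_dist V L E x + \<tau>"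
        using cInf_lessD[of "(\<lambda>y. \<bar>interval_int g y x\<bar>) ` K" "agmon_dist V L E x + \<tau>"] ad by auto
      have "\<bar>interval_int g y x\<bar> = \<bar>G x - G y\<bar>"
        unfolding G_def by (rule interval_int_G[OF gcont x]) (use y in \<open>auto simp: K_def\<close>)
      then show ?thesis using y by auto
    qed
    have Gp: "\<bar>G y - G p\<bar> \<le> sqrt s * L" if y: "y \<in> K" for y
    proof -
      have yL: "y \<in> {0..L}" "V y \<le> E'" using y unfolding K_def by auto
      have "\<forall>z\<in>{min y p..max y p}. g z \<le> sqrt s"
      proof
        fix z assume z: "z \<in> {min y p..max y p}"
        have "V z \<le> max (V (min y p)) (V (max y p))"
          by (rule quasiconv[OF V_deriv crit x0_min]) (use z yL p in auto)
        also have "\<dots> \<le> E' + s" using yL EE s_nonneg by (auto simp: min_def max_def)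
        finally have "max (V z - E') 0 \<le> s" using s_nonneg by auto
        then show "g z \<le> sqrt s" unfolding g_eq by (rule real_sqrt_le_mono)
      qed
      from Glip[OF yL(1) p(1) this] have "\<bar>G y - G p\<bar> \<le> sqrt s * \<bar>y - p\<bar>" .
      also have "\<dots> \<le> sqrt s * L" using yL p s_nonneg by (intro mult_left_mono) auto
      finally show ?thesis .
    qed
    have key: "\<bar>G x - G p\<bar> \<le> agmon_dist V L E x + \<tau> + sqrt s * L" if x: "x \<in> {0..L}" for x
    proof -
      obtain y where y: "y \<in> K" "\<bar>G x - G y\<bar> < agmon_dist V L E x + \<tau>" using agm[OF x] by auto
      have "\<bar>G x - G p\<bar> \<le> \<bar>G x - G y\<bar> + \<bar>G y - G p\<bar>" by linarith
      then show ?thesis using y Gp[OF y(1)] by linarith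
    qed
    define h where "h y = sqrt ((V y - E')\<^sup>2 + \<eta>\<^sup>2)" for y
    define \<Phi> where "\<Phi> y = (norm (\<psi>' y))\<^sup>2 + (h y / \<epsilon>\<^sup>2) * (norm (\<psi> y))\<^sup>2" for y
    define c where "c = (sqrt \<eta> + 2 * s / sqrt \<eta>) / \<epsilon> + M / \<eta>"
    have dG': "\<forall>x\<in>{0..L}. (G has_real_derivative sqrt (max (V x - E') 0)) (at x within {0..L})"
      using dG g_eq by auto
    have phiL: "\<Phi> p * exp (- ((2 / \<epsilon>) * \<bar>G x - G p\<bar> + c * \<bar>x - p\<bar>)) \<le> \<Phi> x" if x: "x \<in> {0..L}" for x
      using phi_lower[OF ep(1) eta_pos V_deriv M(1) d1 d2 Ws EE(1) EE(2) dG' p(1) x]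
      unfolding \<Phi>_def h_def c_def .
    have hge: "h y \<ge> \<eta>" "h y \<ge> \<bar>V y - E'\<bar>" "h y \<le> \<bar>V y - E'\<bar> + \<eta>" for y
      unfolding h_def using h_facts[OF eta_pos] by auto
    have Elow: "E \<ge> - B - 1" using WpE Ws p B s1 by (smt (verit))
    have hp: "h p \<ge> \<kappa> * (\<bar>E\<bar> + 1)"
    proof (cases "E \<le> 2 * B + 3")
      case True
      then have "\<bar>E\<bar> + 1 \<le> 2 * B + 4" using Elow B by linarith
      then have "\<kappa> * (\<bar>E\<bar> + 1) \<le> (\<eta> / (2 * B + 4)) * (2 * B + 4)"
        using kappa_pos B min.cobounded1[of "\<eta> / (2 * B + 4)" "1/2"] unfolding \<kappa>_def[symmetric] by (intro mult_mono) auto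
      also have "\<dots> = \<eta>" using B by simp
      finally show ?thesis using hge(1)[of p] by linarith
    next
      case False
      then have "E' = E" using E0B unfolding E'_def by auto
      then have "\<bar>V p - E'\<bar> \<ge> E - B" using B p by (smt (verit))
      moreover have "\<kappa> * (\<bar>E\<bar> + 1) \<le> (1 / 2) * (\<bar>E\<bar> + 1)"
        using min.cobounded2[of "\<eta> / (2 * B + 4)" "1/2"] unfolding \<kappa>_def[symmetric] by (intro mult_right_mono) auto
      moreover have "(1 / 2) * (\<bar>E\<bar> + 1) \<le> E - B" using False B by auto
      ultimately show ?thesis using hge(2)[of p] by linarith
    qed
    have Fpos: "(\<bar>E\<bar> + 1) / \<epsilon>\<^sup>2 \<ge> 1"
    proof -
      have "\<epsilon>\<^sup>2 \<le> 1" using ep ep1 by (simp add: power_le_one)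
      also have "1 \<le> \<bar>E\<bar> + 1" by simp
      finally show ?thesis using ep by simp
    qed
    have Phip: "\<Phi> p \<ge> \<kappa> * (\<bar>E\<bar> + 1) / (\<epsilon>\<^sup>2 * L)"
    proof -
      have "\<kappa> * (\<bar>E\<bar> + 1) / (\<epsilon>\<^sup>2 * L) = (\<kappa> * (\<bar>E\<bar> + 1) / \<epsilon>\<^sup>2) * (1 / L)" by simp
      also have "\<dots> \<le> (h p / \<epsilon>\<^sup>2) * (norm (\<psi> p))\<^sup>2"
        using hp p(3) kappa_pos L_pos ep hge(1)[of p] eta_pos by (intro mult_mono divide_right_mono) auto
      also have "\<dots> \<le> \<Phi> p" unfolding \<Phi>_def by simp
      finally show ?thesis .
    qed
    have Phip0: "\<Phi> p \<ge> 0"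
    proof -
      have "0 \<le> \<kappa> * (\<bar>E\<bar> + 1) / (\<epsilon>\<^sup>2 * L)" using kappa_pos L_pos by simp
      then show ?thesis using Phip by linarith
    qed
    have c0: "c \<ge> 0" unfolding c_def using eta_pos ep M s_nonneg by (simp add: add_nonneg_nonneg)
    have lowb: "\<kappa> * (\<bar>E\<bar> + 1) / (\<epsilon>\<^sup>2 * L) * exp (- ((2 / \<epsilon>) * D + c * L)) \<le> \<Phi> x"
      if x: "x \<in> {0..L}" and D: "\<bar>G x - G p\<bar> \<le> D" for x D
    proof -
      have "(2 / \<epsilon>) * \<bar>G x - G p\<bar> + c * \<bar>x - p\<bar> \<le> (2 / \<epsilon>) * D + c * L"
        using D x p c0 ep by (intro add_mono mult_left_mono) auto
      then have "exp (- ((2 / \<epsilon>) * D + c * L)) \<le> exp (- ((2 / \<epsilon>) * \<bar>G x - G p\<bar> + c * \<bar>x - p\<bar>))" by simp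
      then have "\<kappa> * (\<bar>E\<bar> + 1) / (\<epsilon>\<^sup>2 * L) * exp (- ((2 / \<epsilon>) * D + c * L)) \<le> \<Phi> p * exp (- ((2 / \<epsilon>) * \<bar>G x - G p\<bar> + c * \<bar>x - p\<bar>))"
        using Phip Phip0 kappa_pos L_pos ep by (intro mult_mono) auto
      then show ?thesis using phiL[OF x] by linarith
    qed
    have cL: "c * L = ((s\<eta> + 2 * s / s\<eta>) * L) / \<epsilon> + M * L / \<eta>"
      unfolding c_def sqrt_eta by (simp add: field_simps)
    have tau: "\<tau> = \<delta> / 16" by (rule \<tau>_def)
    have sq_exp: "exp (- (2 * u) / \<epsilon>) = (exp (- (1 / \<epsilon>) * u))\<^sup>2" for u
    proof -
      have "exp (- (2 * u) / \<epsilon>) = exp (- (1 / \<epsilon>) * u + - (1 / \<epsilon>) * u)" by (simp add: field_simps)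
      also have "\<dots> = (exp (- (1 / \<epsilon>) * u))\<^sup>2" by (simp only: exp_add power2_eq_square)
      finally show ?thesis .
    qed
    have bdry: "exp (- (1 / \<epsilon>) * (agmon_dist V L E x + \<delta>)) \<le> \<epsilon> / sqrt (\<bar>E\<bar> + 1) * cmod (\<psi>' x)"
      if x: "x \<in> {0..L}" "\<psi> x = 0" for x
    proof -
      define D where "D = agmon_dist V L E x + \<tau> + sqrt s * L"
      have lb: "\<kappa> * (\<bar>E\<bar> + 1) / (\<epsilon>\<^sup>2 * L) * exp (- ((2 / \<epsilon>) * D + c * L)) \<le> (norm (\<psi>' x))\<^sup>2"
        using lowb[OF x(1) key[OF x(1), folded D_def]] x(2) unfolding \<Phi>_def by simp
      define T where "T = \<epsilon> / sqrt (\<bar>E\<bar> + 1) * cmod (\<psi>' x)"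
      have T0: "T \<ge> 0" unfolding T_def using ep by simp
      have T2: "T\<^sup>2 = \<epsilon>\<^sup>2 / (\<bar>E\<bar> + 1) * (norm (\<psi>' x))\<^sup>2"
        unfolding T_def by (simp add: power_mult_distrib power_divide)
      define X where "X = 2 * D + (s\<eta> + 2 * s / s\<eta>) * L"
      define Y where "Y = M * L / \<eta>"
      have XY: "(2 / \<epsilon>) * D + c * L = X / \<epsilon> + Y" unfolding X_def Y_def cL by (simp add: add_divide_distrib)
      have "A1 * exp (- (X / \<epsilon> + Y)) = \<epsilon>\<^sup>2 / (\<bar>E\<bar> + 1) * (\<kappa> * (\<bar>E\<bar> + 1) / (\<epsilon>\<^sup>2 * L) * exp (- ((2 / \<epsilon>) * D + c * L)))"
      proof -
        have gen: "a / b * (k * b / (a * L) * z) = k / L * z" if "a \<noteq> 0" "b \<noteq> 0" for a b k z :: real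
          using that L_pos by (simp add: field_simps)
        have "\<bar>E\<bar> + 1 \<noteq> 0" using abs_ge_zero[of E] by linarith
        then show ?thesis unfolding A1_def XY[symmetric] using gen[of "\<epsilon>\<^sup>2" "\<bar>E\<bar> + 1"] ep by simp
      qed
      also have "\<dots> \<le> \<epsilon>\<^sup>2 / (\<bar>E\<bar> + 1) * (norm (\<psi>' x))\<^sup>2"
        using lb by (intro mult_left_mono) auto
      finally have A1T: "A1 * exp (- (X / \<epsilon> + Y)) \<le> T\<^sup>2" unfolding T2 .
      have "exp (- (2 * (agmon_dist V L E x + \<delta>)) / \<epsilon>) \<le> A1 * exp (- (X / \<epsilon> + Y))"
      proof (rule exp_final[OF A1_pos ep(1)])
        have "\<epsilon> * (Y + \<bar>ln A1\<bar>) \<le> \<epsilon> * K0"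
          unfolding K0_def Y_def using ep by (intro mult_left_mono) auto
        also have "\<dots> \<le> 3 * \<delta> / 4" using ep1 by simp
        also have "\<dots> \<le> 2 * (agmon_dist V L E x + \<delta>) - X"
          unfolding X_def D_def using sqrt_s seL sse tau \<delta>_pos by (simp add: algebra_simps)
        finally show "\<epsilon> * (Y + \<bar>ln A1\<bar>) \<le> 2 * (agmon_dist V L E x + \<delta>) - X" .
      qed
      then have "(exp (- (1 / \<epsilon>) * (agmon_dist V L E x + \<delta>)))\<^sup>2 \<le> T\<^sup>2"
        using A1T unfolding sq_exp[symmetric] by linarith
      then show ?thesis using T0 unfolding T_def by (rule power2_le_imp_le)
    qed
    have tau_pos: "\<tau> > 0" using tau \<delta>_pos by simp
    have Une: "U \<noteq> {}" using U_ne interior_subset by blast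
    define dU where "dU = (INF x\<in>U. agmon_dist V L E x)"
    obtain xs where xs: "xs \<in> U" "agmon_dist V L E xs < dU + \<tau>"
      using cInf_lessD[of "agmon_dist V L E ` U" "dU + \<tau>"] Une tau_pos unfolding dU_def by auto
    have xsL: "xs \<in> {0..L}" using U_sub xs by auto
    have ivl: "\<And>a b y. a \<in> U \<Longrightarrow> b \<in> U \<Longrightarrow> a \<le> y \<Longrightarrow> y \<le> b \<Longrightarrow> y \<in> U"
      using U_int unfolding is_interval_1 by blast
    obtain \<alpha> \<beta> where ab: "\<alpha> \<le> \<beta>" "\<beta> - \<alpha> = ll" "{\<alpha>..\<beta>} \<subseteq> U" "xs \<in> {\<alpha>..\<beta>}"
    proof (cases "xs \<le> z0")
      case True
      have zr: "z0 + r0 / 2 \<in> U" using r0 by (intro subsetD[OF r0(2)]) (auto simp: dist_real_def)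
      have "{xs..xs + ll} \<subseteq> U"
      proof
        fix y assume "y \<in> {xs..xs + ll}"
        then show "y \<in> U" using ivl[OF xs(1) zr, of y] True l_r by auto
      qed
      then show ?thesis using that[of xs "xs + ll"] l_pos by auto
    next
      case False
      have zr: "z0 - r0 / 2 \<in> U" using r0 by (intro subsetD[OF r0(2)]) (auto simp: dist_real_def)
      have "{xs - ll..xs} \<subseteq> U"
      proof
        fix y assume "y \<in> {xs - ll..xs}"
        then show "y \<in> U" using ivl[OF zr xs(1), of y] False l_r by auto
      qed
      then show ?thesis using that[of "xs - ll" xs] l_pos by auto
    qed
    have abL1: "{\<alpha>..\<beta>} \<subseteq> {0..L}" using ab(3) U_sub by blast
    have "\<alpha> \<in> {0..L}" "\<beta> \<in> {0..L}" using abL1 ab(1) by auto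
    then have abL: "{\<alpha>..\<beta>} \<subseteq> {0..L}" "0 \<le> \<alpha>" "\<beta> \<le> L" using abL1 by auto
    define DU where "DU = dU + 2 * \<tau> + Gm * ll + sqrt s * L"
    have Dx: "\<bar>G x - G p\<bar> \<le> DU" if x: "x \<in> {\<alpha>..\<beta>}" for x
    proof -
      have xL: "x \<in> {0..L}" using x abL by auto
      have "\<bar>G x - G xs\<bar> \<le> Gm * \<bar>x - xs\<bar>"
      proof (rule Glip[OF xL xsL], intro ballI)
        fix z assume "z \<in> {min x xs..max x xs}"
        then have "z \<in> {0..L}" using xL xsL by (auto simp: min_def max_def split: if_splits)
        then show "g z \<le> Gm" using g_bd by auto
      qed
      also have "\<dots> \<le> Gm * ll" using x ab Gm0 by (intro mult_left_mono) auto
      finally have a1: "\<bar>G x - G xs\<bar> \<le> Gm * ll" .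
      have a2: "\<bar>G xs - G p\<bar> \<le> agmon_dist V L E xs + \<tau> + sqrt s * L" using key[OF xsL] .
      have "\<bar>G x - G p\<bar> \<le> \<bar>G x - G xs\<bar> + \<bar>G xs - G p\<bar>" by linarith
      then show ?thesis using a1 a2 xs(2) unfolding DU_def by linarith
    qed
    define Xp where "Xp = exp (- ((2 / \<epsilon>) * DU + c * L))"
    define mm where "mm = \<kappa> * (\<bar>E\<bar> + 1) / (\<epsilon>\<^sup>2 * L) * Xp"
    have mmb: "\<forall>x\<in>{\<alpha>..\<beta>}. mm \<le> (norm (\<psi>' x))\<^sup>2 + (h x / \<epsilon>\<^sup>2) * (norm (\<psi> x))\<^sup>2"
      using lowb Dx abL unfolding mm_def Xp_def \<Phi>_def by auto
    define Q where "Q = (2 * B + 1 + \<eta> + \<bar>E\<bar>) / \<epsilon>\<^sup>2"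
    have qb: "\<forall>x\<in>{\<alpha>..\<beta>}. \<bar>(W x - E) / \<epsilon>\<^sup>2\<bar> \<le> Q"
    proof
      fix x assume "x \<in> {\<alpha>..\<beta>}"
      then have xL: "x \<in> {0..L}" using abL by auto
      have "\<bar>W x - E\<bar> \<le> 2 * B + 1 + \<eta> + \<bar>E\<bar>" using Ws xL B s1 eta_pos by (smt (verit))
      then show "\<bar>(W x - E) / \<epsilon>\<^sup>2\<bar> \<le> Q" unfolding Q_def using ep by (simp add: divide_right_mono)
    qed
    have wb: "\<forall>x\<in>{\<alpha>..\<beta>}. 0 \<le> h x / \<epsilon>\<^sup>2 \<and> h x / \<epsilon>\<^sup>2 \<le> Q"
    proof
      fix x assume "x \<in> {\<alpha>..\<beta>}"
      then have xL: "x \<in> {0..L}" using abL by auto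
      have "h x \<le> 2 * B + 1 + \<eta> + \<bar>E\<bar>" using hge(3)[of x] B xL E'B by (smt (verit))
      moreover have "h x \<ge> 0" using hge(1)[of x] eta_pos by linarith
      ultimately show "0 \<le> h x / \<epsilon>\<^sup>2 \<and> h x / \<epsilon>\<^sup>2 \<le> Q" unfolding Q_def using ep by (simp add: divide_right_mono)
    qed
    have d1': "\<forall>x\<in>{\<alpha>..\<beta>}. (\<psi> has_vector_derivative \<psi>' x) (at x within {\<alpha>..\<beta>})"
      using has_vector_derivative_within_subset[OF d1[rule_format] abL(1)] abL by auto
    have d2': "\<forall>x\<in>{\<alpha>..\<beta>}. (\<psi>' has_vector_derivative (((W x - E) / \<epsilon>\<^sup>2) *\<^sub>R \<psi> x)) (at x within {\<alpha>..\<beta>})"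
      using has_vector_derivative_within_subset[OF d2[rule_format] abL(1)] abL by auto
    define JI where "JI = integral {\<alpha>..\<beta>} (\<lambda>x. (norm (\<psi> x))\<^sup>2)"
    have cac: "mm * ll^5 / 30 \<le> (4 * ll\<^sup>2 + Q * ll^4 / 4) * JI"
      using caccioppoli[OF ab(1) d1' d2' qb wb mmb] ab(2) unfolding JI_def by simp
    define F where "F = (\<bar>E\<bar> + 1) / \<epsilon>\<^sup>2"
    have F1: "F \<ge> 1" unfolding F_def using Fpos .
    have JI0: "JI \<ge> 0" unfolding JI_def by (rule integral_nonneg) (auto intro!: integrable_continuous_interval continuous_intros vd_cont_on[OF d1'])
    have QF: "Q \<le> C3 * F"
    proof -
      have "2 * B + 1 + \<eta> + \<bar>E\<bar> \<le> C3 * (\<bar>E\<bar> + 1)" unfolding C3_def using B eta_pos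
        by (simp add: algebra_simps)
      then show ?thesis unfolding Q_def F_def using ep by (simp add: divide_right_mono)
    qed
    have denF: "4 * ll\<^sup>2 + Q * ll^4 / 4 \<le> Den * F"
    proof -
      have "4 * ll\<^sup>2 * 1 \<le> 4 * ll\<^sup>2 * F" using F1 by (intro mult_left_mono) auto
      moreover have "Q * ll^4 / 4 \<le> C3 * F * ll^4 / 4" using QF by (simp add: divide_right_mono mult_right_mono)
      ultimately show ?thesis unfolding Den_def by (simp add: algebra_simps)
    qed
    have mmF: "mm = (\<kappa> / L) * F * Xp" unfolding mm_def F_def by (simp add: field_simps)
    have Xp0: "Xp > 0" unfolding Xp_def by simp
    have "(\<kappa> / L) * F * Xp * ll^5 / 30 \<le> Den * F * JI"
    proof -
      have "(\<kappa> / L) * F * Xp * ll^5 / 30 \<le> (4 * ll\<^sup>2 + Q * ll^4 / 4) * JI" using cac mmF by simp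
      also have "\<dots> \<le> Den * F * JI" using denF JI0 by (rule mult_right_mono)
      finally show ?thesis .
    qed
    then have "F * ((\<kappa> / L) * Xp * ll^5 / 30) \<le> F * (Den * JI)" by (simp add: algebra_simps)
    then have "(\<kappa> / L) * Xp * ll^5 / 30 \<le> Den * JI" using F1 mult_le_cancel_left_pos[of F] by (simp only:)
    then have JIb: "A2 * Xp \<le> JI" unfolding A2_def using Den_pos L_pos by (simp add: field_simps)
    define JU where "JU = integral U (\<lambda>x. (norm (\<psi> x))\<^sup>2)"
    have cn: "continuous_on {0..L} (\<lambda>x. (norm (\<psi> x))\<^sup>2)" by (intro continuous_intros vd_cont_on[OF d1])
    have JIU: "JI \<le> JU" unfolding JI_def JU_def
    proof (rule integral_subset_le[OF ab(3)])
      show "(\<lambda>x. (norm (\<psi> x))\<^sup>2) integrable_on {\<alpha>..\<beta>}"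
        by (rule integrable_continuous_interval) (rule continuous_on_subset[OF cn abL(1)])
      show "(\<lambda>x. (norm (\<psi> x))\<^sup>2) integrable_on U"
        by (rule integrable_sub_interval[OF cn _ U_int U_sub]) auto
    qed auto
    have Ub: "exp (- (1 / \<epsilon>) * (dU + \<delta>)) \<le> sqrt JU"
    proof -
      define X where "X = 2 * DU + (s\<eta> + 2 * s / s\<eta>) * L"
      define Y where "Y = M * L / \<eta>"
      have XY: "(2 / \<epsilon>) * DU + c * L = X / \<epsilon> + Y" unfolding X_def Y_def cL by (simp add: add_divide_distrib)
      have "exp (- (2 * (dU + \<delta>)) / \<epsilon>) \<le> A2 * exp (- (X / \<epsilon> + Y))"
      proof (rule exp_final[OF A2_pos ep(1)])
        have "\<epsilon> * (Y + \<bar>ln A2\<bar>) \<le> \<epsilon> * K0"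
          unfolding K0_def Y_def using ep by (intro mult_left_mono) auto
        also have "\<dots> \<le> 3 * \<delta> / 4" using ep1 by simp
        also have "\<dots> \<le> 2 * (dU + \<delta>) - X"
        proof -
          have e1: "(s\<eta> + 2 * s / s\<eta>) * L = s\<eta> * L + 2 * s / s\<eta> * L" by (simp add: algebra_simps)
          have gen: "3 * \<delta> / 4 \<le> 2 * (dU + \<delta>) - (2 * (dU + 2 * (\<delta> / 16) + e + a) + (b + c))"
            if "a \<le> \<delta> / 8" "b \<le> \<delta> / 4" "c \<le> \<delta> / 4" "e \<le> \<delta> / 8" for a b c e
            using that by argo
          show ?thesis unfolding X_def DU_def e1 tau using gen[OF sqrt_s seL sse Gml] .
        qed
        finally show "\<epsilon> * (Y + \<bar>ln A2\<bar>) \<le> 2 * (dU + \<delta>) - X" .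
      qed
      also have "\<dots> = A2 * Xp" unfolding Xp_def XY ..
      also have "\<dots> \<le> JU" using JIb JIU by linarith
      finally have "(exp (- (1 / \<epsilon>) * (dU + \<delta>)))\<^sup>2 \<le> JU" unfolding sq_exp .
      then show ?thesis by (rule real_le_rsqrt)
    qed
    show "sqrt (integral U (\<lambda>x. (cmod (\<psi> x))\<^sup>2)) \<ge> exp (- (1 / \<epsilon>) * ((INF x\<in>U. agmon_dist V L E x) + \<delta>))"
      using Ub unfolding JU_def dU_def by simp
    show "\<epsilon> / sqrt (\<bar>E\<bar> + 1) * cmod (\<psi>' 0) \<ge> exp (- (1 / \<epsilon>) * (agmon_dist V L E 0 + \<delta>))"
      using bdry[of 0] hyp L_pos by auto
    show "\<epsilon> / sqrt (\<bar>E\<bar> + 1) * cmod (\<psi>' L) \<ge> exp (- (1 / \<epsilon>) * (agmon_dist V L E L + \<delta>))"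
      using bdry[of L] hyp L_pos by auto
  qed
qed


end
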